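(* Let $p$ be a prime and $R=\mathcal{O}_{\mathbb{C}_p}$ the valuation ring of $\mathbb{C}_p$. Then $R$ does not satisfy the following condition: for any $r_0,r_1,\dots\in R$ with $r_0+I_0\supseteq r_1+I_1\supseteq r_2+I_2\supseteq\cdots$, the intersection $\bigcap_{i\ge0}(r_i+I_i)$ is nonempty.
   Context: $\mathbb{C}_p$ is the completion of an algebraic closure of $\mathbb{Q}_p$. For a commutative ring $R$, define ideals $I_0=R$ and $I_i=\{r\in R: r^p\in pI_{i-1}\}$ for $i>0$. *)

theory Defs
  imports "HOL-Computational_Algebra.Computational_Algebra"
begin

definition padic_abs :: "nat \<Rightarrow> rat \<Rightarrow> real" where
  "padic_abs p r = (if r = 0 then 0 else
     (case quotient_of r of (a, b) \<Rightarrow>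
        real p ^ multiplicity (int p) b / real p ^ multiplicity (int p) a))"

definition nonarch_abs :: "('k::field \<Rightarrow> real) \<Rightarrow> bool" where
  "nonarch_abs v \<longleftrightarrow> v 0 = 0 \<and> (\<forall>x. x \<noteq> 0 \<longrightarrow> v x > 0) \<and>
     (\<forall>x y. v (x * y) = v x * v y) \<and> (\<forall>x y. v (x + y) \<le> max (v x) (v y))"

definition abs_complete :: "('k::field \<Rightarrow> real) \<Rightarrow> bool" where
  "abs_complete v \<longleftrightarrow> (\<forall>s::nat \<Rightarrow> 'k.
     (\<forall>e>0. \<exists>N. \<forall>m\<ge>N. \<forall>n\<ge>N. v (s m - s n) < e) \<longrightarrow>
     (\<exists>L. \<forall>e>0. \<exists>N. \<forall>n\<ge>N. v (s n - L) < e))"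

definition alg_closed_field :: "'k::field itself \<Rightarrow> bool" where
  "alg_closed_field _ \<longleftrightarrow> (\<forall>q::'k poly. degree q > 0 \<longrightarrow> (\<exists>x. poly q x = 0))"

text \<open>(K, v) is (isometric to) C_p: an algebraically closed field of characteristic 0,
  complete for a non-archimedean absolute value extending the p-adic one on Q, in which
  the algebraic numbers (an algebraic closure of Q, hence of a dense copy of Qbar_p) are dense.
  This characterizes C_p = completion of an algebraic closure of Q_p up to isometric isomorphism.\<close>
definition is_Cp :: "nat \<Rightarrow> ('k::field_char_0 \<Rightarrow> real) \<Rightarrow> bool" where
  "is_Cp p v \<longleftrightarrow> nonarch_abs v \<and> abs_complete v \<and> alg_closed_field TYPE('k) \<and>
     (\<forall>r. v (of_rat r) = padic_abs p r) \<and>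
     (\<forall>x. \<forall>e>0. \<exists>y. algebraic y \<and> v (x - y) < e)"

definition val_ring :: "('k::field \<Rightarrow> real) \<Rightarrow> 'k set" where
  "val_ring v = {x. v x \<le> 1}"

fun I_seq :: "nat \<Rightarrow> 'k::comm_ring_1 set \<Rightarrow> nat \<Rightarrow> 'k set" where
  "I_seq p R 0 = R"
| "I_seq p R (Suc i) = {r \<in> R. r ^ p \<in> {of_nat p * x | x. x \<in> I_seq p R i}}"

definition coset :: "'k::plus \<Rightarrow> 'k set \<Rightarrow> 'k set" where
  "coset r I = {r + x | x. x \<in> I}"

definition nested_coset_condition :: "nat \<Rightarrow> 'k::comm_ring_1 set \<Rightarrow> bool" where
  "nested_coset_condition p R \<longleftrightarrow> (\<forall>r::nat \<Rightarrow> 'k. (\<forall>i. r i \<in> R) \<longrightarrow>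
     (\<forall>i. coset (r (Suc i)) (I_seq p R (Suc i)) \<subseteq> coset (r i) (I_seq p R i)) \<longrightarrow>
     (\<Inter>i. coset (r i) (I_seq p R i)) \<noteq> {})"

end

theory Submission
  imports Defs "HOL-Library.Countable_Set"
begin

lemma cnt_intpoly: "countable (UNIV :: int poly set)"
proof -
  have i: "inj (coeffs :: int poly \<Rightarrow> int list)" by (simp add: inj_on_def coeffs_eq_iff)
  have "countable (coeffs ` (UNIV :: int poly set))"
    by (rule countable_subset[OF subset_UNIV]) simp
  then show ?thesis using countable_image_inj_on i by blast
qed

lemma cnt_alg: "countable {x::'k::field_char_0. algebraic x}"
proof -
  have "{x::'k. algebraic x} \<subseteq> (\<Union>q\<in>{q::int poly. q \<noteq> 0}. {x. poly (map_poly of_int q) x = 0})"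
  proof
    fix x :: 'k assume "x \<in> {x. algebraic x}"
    then obtain q :: "int poly" where "q \<noteq> 0" "poly (map_poly of_int q) x = 0"
      by (auto elim: algebraicE')
    then show "x \<in> (\<Union>q\<in>{q::int poly. q \<noteq> 0}. {x. poly (map_poly of_int q) x = 0})" by blast
  qed
  moreover have "countable (\<Union>q\<in>{q::int poly. q \<noteq> 0}. {x::'k. poly (map_poly of_int q) x = 0})"
  proof (rule countable_UN)
    show "countable {q::int poly. q \<noteq> 0}" by (rule countable_subset[OF subset_UNIV cnt_intpoly])
    fix q :: "int poly" assume "q \<in> {q. q \<noteq> 0}"
    then have "map_poly (of_int :: int \<Rightarrow> 'k) q \<noteq> 0" by (simp add: map_poly_eq_0_iff)
    then have "finite {x::'k. poly (map_poly of_int q) x = 0}" by (rule poly_roots_finite)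
    then show "countable {x::'k. poly (map_poly of_int q) x = 0}" by (rule countable_finite)
  qed
  ultimately show ?thesis by (rule countable_subset)
qed

lemma padic_p: "prime p \<Longrightarrow> padic_abs p (of_nat p) = 1 / real p"
proof -
  assume pr: "prime p"
  have q: "quotient_of (of_nat p) = (int p, 1)" by simp
  have "multiplicity (int p) (int p) = 1" using pr
    by (simp add: multiplicity_self prime_gt_0_nat)
  moreover have "(of_nat p :: rat) \<noteq> 0" using pr by (simp add: prime_gt_0_nat)
  ultimately show ?thesis by (simp add: padic_abs_def q)
qed

lemma root_ex:
  fixes a :: "'k::field"
  assumes "alg_closed_field TYPE('k)" "n \<ge> 1"
  shows "\<exists>z. z ^ n = a"
proof -
  have "degree (monom (1::'k) n + [:-a:]) = n"
    using assms(2) by (subst degree_add_eq_left) (auto simp: degree_monom_eq)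
  then obtain z where "poly (monom (1::'k) n + [:-a:]) z = 0"
    using assms unfolding alg_closed_field_def by (metis not_one_le_zero neq0_conv)
  then show ?thesis by (auto simp: poly_monom)
qed

context
  fixes v :: "'k::field_char_0 \<Rightarrow> real"
  assumes na: "nonarch_abs v"
begin

lemma v0: "v 0 = 0" using na unfolding nonarch_abs_def by blast
lemma vmult: "v (x * y) = v x * v y" using na unfolding nonarch_abs_def by blast
lemma vadd: "v (x + y) \<le> max (v x) (v y)" using na unfolding nonarch_abs_def by blast
lemma vpos: "x \<noteq> 0 \<Longrightarrow> v x > 0" using na unfolding nonarch_abs_def by blast
lemma vnn: "v x \<ge> 0" using v0 vpos by (cases "x = 0") (auto simp: less_imp_le)
lemma v1: "v 1 = 1"
proof -
  have "v 1 = v 1 * v 1" using vmult[of 1 1] by simp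
  moreover have "v 1 > 0" using vpos[of 1] by simp
  ultimately show ?thesis by simp
qed
lemma vpow: "v (x ^ n) = v x ^ n" by (induction n) (auto simp: v1 vmult)
lemma vminus: "v (- x) = v x"
proof -
  have h: "v (-1) * v (-1) = 1" using vmult[of "-1" "-1"] v1 by simp
  have nn: "v (-1) \<ge> 0" by (rule vnn)
  have "(v (-1) - 1) * (v (-1) + 1) = 0" using h by (simp add: algebra_simps)
  then have "v (-1) - 1 = 0 \<or> v (-1) + 1 = 0" by simp
  then have "v (-1) = 1" using nn by linarith
  then show ?thesis using vmult[of "-1" x] by simp
qed
lemma vdiff: "v (x - y) \<le> max (v x) (v y)"
  using vadd[of x "-y"] vminus[of y] by simp
lemma vsym: "v (x - y) = v (y - x)" using vminus[of "x - y"] by simp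

end

theorem lemma5p5:
  fixes p :: nat and v :: "'k::field_char_0 \<Rightarrow> real"
  assumes "prime p" and "is_Cp p v"
  shows "\<not> nested_coset_condition p (val_ring v)"
proof
  assume NC: "nested_coset_condition p (val_ring v)"
  have na: "nonarch_abs v" and ac: "alg_closed_field TYPE('k)"
    and dens: "\<And>x e. e > 0 \<Longrightarrow> \<exists>y. algebraic y \<and> v (x - y) < e"
    and vrat: "\<And>r. v (of_rat r) = padic_abs p r"
    using assms(2) unfolding is_Cp_def by blast+
  have p1: "p \<ge> 1" "p \<ge> 2" using prime_ge_2_nat[OF assms(1)] by auto
  have vp: "v (of_nat p) = 1 / real p"
    using vrat[of "of_nat p"] padic_p[OF assms(1)] by (simp add: of_rat_of_nat_eq)
  have pnz: "(of_nat p :: 'k) \<noteq> 0" using p1 by simp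
  have pm1: "p - 1 \<ge> 1" using p1 by simp
  obtain pi :: 'k where pi: "pi ^ (p - 1) = of_nat p"
    using root_ex[OF ac pm1, of "of_nat p"] by blast
  have pS: "p = Suc (p - 1)" using p1 by simp
  have pw: "x ^ p = x * x ^ (p - 1)" for x :: real by (metis pS power_Suc)
  have vpi_pow: "v pi ^ (p - 1) = 1 / real p" using pi vpow[OF na, of pi "p - 1"] vp by simp
  have vpi_pos: "v pi > 0"
  proof -
    have "p - 1 \<noteq> 0" using p1 by simp
    then have "pi \<noteq> 0" using pi pnz by (metis power_0_left)
    then show ?thesis using vpos[OF na] by blast
  qed
  define nxt :: "'k \<Rightarrow> 'k" where "nxt x = (SOME z. z ^ p = of_nat p * x)" for x
  have nxt: "nxt x ^ p = of_nat p * x" for x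
    unfolding nxt_def by (rule someI_ex) (rule root_ex[OF ac p1(1)])
  define c :: "nat \<Rightarrow> 'k" where "c i = (nxt ^^ i) 1" for i
  have c0: "c 0 = 1" and cS: "c (Suc i) ^ p = of_nat p * c i" for i
    by (simp_all add: c_def nxt)
  have vcS: "v (c (Suc i)) ^ p = v (c i) / real p" for i
    using cS[of i] vpow[OF na, of "c (Suc i)" p] vmult[OF na, of "of_nat p" "c i"] vp by simp
  have cgt: "v (c i) > v pi" for i
  proof (induction i)
    case 0
    have "v pi < 1"
    proof (rule ccontr)
      assume "\<not> v pi < 1"
      then have "v pi ^ (p - 1) \<ge> 1" by (simp add: one_le_power)
      then show False using vpi_pow p1 by simp
    qed
    then show ?case using c0 v1[OF na] by simp
  next
    case (Suc i)
    have "v pi ^ p = v pi * v pi ^ (p - 1)" by (rule pw)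
    also have "\<dots> = v pi * (1 / real p)" using vpi_pow by simp
    also have "\<dots> < v (c i) / real p" using Suc p1 by (simp add: divide_strict_right_mono)
    also have "\<dots> = v (c (Suc i)) ^ p" by (simp add: vcS)
    finally show ?case by (rule power_less_imp_less_base[OF _ vnn[OF na]])
  qed
  have cdec: "v (c (Suc i)) < v (c i)" for i
  proof -
    have "v (c (Suc i)) ^ p = v (c i) * (1 / real p)" by (simp add: vcS)
    also have "\<dots> = v (c i) * v pi ^ (p - 1)" using vpi_pow by simp
    also have "\<dots> < v (c i) * v (c i) ^ (p - 1)"
      using cgt[of i] vpi_pos p1 by (intro mult_strict_left_mono power_strict_mono) auto
    also have "\<dots> = v (c i) ^ p" by (rule pw[symmetric])
    finally show ?thesis by (rule power_less_imp_less_base[OF _ vnn[OF na]])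
  qed
  have cle1: "v (c i) \<le> 1" for i
  proof (induction i)
    case 0 then show ?case using c0 v1[OF na] by simp
  next
    case (Suc i) then show ?case using cdec[of i] by simp
  qed
  have Ichar: "I_seq p (val_ring v) i = {x. v x \<le> v (c i)}" for i
  proof (induction i)
    case 0 then show ?case using c0 v1[OF na] by (simp add: val_ring_def)
  next
    case (Suc i)
    have "r \<in> I_seq p (val_ring v) (Suc i) \<longleftrightarrow> v r \<le> v (c (Suc i))" for r
    proof -
      have "r \<in> I_seq p (val_ring v) (Suc i) \<longleftrightarrow> v r \<le> 1 \<and> v (r ^ p / of_nat p) \<le> v (c i)"
      proof -
        have "(\<exists>x. r ^ p = of_nat p * x \<and> v x \<le> v (c i)) \<longleftrightarrow> v (r ^ p / of_nat p) \<le> v (c i)"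
        proof
          assume "\<exists>x. r ^ p = of_nat p * x \<and> v x \<le> v (c i)"
          then obtain x where "r ^ p = of_nat p * x" "v x \<le> v (c i)" by blast
          moreover then have "x = r ^ p / of_nat p" using pnz by simp
          ultimately show "v (r ^ p / of_nat p) \<le> v (c i)" by simp
        next
          assume "v (r ^ p / of_nat p) \<le> v (c i)"
          moreover have "r ^ p = of_nat p * (r ^ p / of_nat p)" using pnz by simp
          ultimately show "\<exists>x. r ^ p = of_nat p * x \<and> v x \<le> v (c i)" by blast
        qed
        then show ?thesis using Suc by (auto simp: val_ring_def)
      qed
      also have "v (r ^ p / of_nat p) = v r ^ p * real p"
      proof -
        have "r ^ p = (r ^ p / of_nat p) * of_nat p" using pnz by simp
        then have "v (r ^ p) = v (r ^ p / of_nat p) * v (of_nat p)"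
          using vmult[OF na, of "r ^ p / of_nat p" "of_nat p"] by simp
        then have "v r ^ p = v (r ^ p / of_nat p) * (1 / real p)" using vp vpow[OF na, of r p] by simp
        then show ?thesis using p1 by (simp add: field_simps)
      qed
      also have "v r ^ p * real p \<le> v (c i) \<longleftrightarrow> v r ^ p \<le> v (c (Suc i)) ^ p"
        using p1 by (simp add: vcS field_simps)
      also have "\<dots> \<longleftrightarrow> v r \<le> v (c (Suc i))"
        using p1 vnn[OF na] by (simp add: power_mono_iff)
      finally show ?thesis using cle1[of "Suc i"] by auto
    qed
    then show ?case by auto
  qed
  have cosetI: "z \<in> coset r (I_seq p (val_ring v) i) \<longleftrightarrow> v (z - r) \<le> v (c i)" for z r i
    unfolding coset_def Ichar by (auto intro!: exI[of _ "z - r"])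
  have "algebraic (0::'k)" by (rule algebraicI[of "[:0,1:]"]) (auto simp: coeff_pCons split: nat.split)
  then have ne: "{x::'k. algebraic x} \<noteq> {}" by auto
  define a where "a = from_nat_into {x::'k. algebraic x}"
  have asurj: "\<exists>n. a n = y" if "algebraic y" for y
    using from_nat_into_surj[OF cnt_alg, of y] that unfolding a_def by auto
  define stp :: "nat \<Rightarrow> 'k \<Rightarrow> 'k" where
    "stp i x = (if v (a i - x) \<le> v (c (Suc i)) then x + c i else x)" for i x
  define r :: "nat \<Rightarrow> 'k" where "r i = rec_nat 0 stp i" for i
  have r0: "r 0 = 0" and rS: "r (Suc i) = stp i (r i)" for i by (simp_all add: r_def)
  have rstep: "v (r (Suc i) - r i) \<le> v (c i)" for i
    using vnn[OF na] v0[OF na] by (auto simp: rS stp_def)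
  have avoid: "\<not> v (a i - r (Suc i)) \<le> v (c (Suc i))" for i
  proof
    assume H: "v (a i - r (Suc i)) \<le> v (c (Suc i))"
    show False
    proof (cases "v (a i - r i) \<le> v (c (Suc i))")
      case True
      then have "r (Suc i) = r i + c i" by (simp add: rS stp_def)
      then have "c i = (a i - r i) - (a i - r (Suc i))" by simp
      then have "v (c i) \<le> max (v (a i - r i)) (v (a i - r (Suc i)))" using vdiff[OF na, of "a i - r i" "a i - r (Suc i)"] by metis
      then show False using True H cdec[of i] by linarith
    next
      case False
      then show False using H by (simp add: rS stp_def)
    qed
  qed
  have rR: "r i \<in> val_ring v" for i
  proof (induction i)
    case 0 then show ?case using v0[OF na] by (simp add: r0 val_ring_def)
  next
    case (Suc i)
    have "r (Suc i) = r i + (r (Suc i) - r i)" by simp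
    then have "v (r (Suc i)) \<le> max (v (r i)) (v (r (Suc i) - r i))" using vadd[OF na, of "r i" "r (Suc i) - r i"] by metis
    then show ?case using Suc rstep[of i] cle1[of i] by (auto simp: val_ring_def)
  qed
  have nest: "coset (r (Suc i)) (I_seq p (val_ring v) (Suc i)) \<subseteq> coset (r i) (I_seq p (val_ring v) i)" for i
  proof
    fix z assume "z \<in> coset (r (Suc i)) (I_seq p (val_ring v) (Suc i))"
    then have h: "v (z - r (Suc i)) \<le> v (c (Suc i))" by (simp only: cosetI)
    have "z - r i = (z - r (Suc i)) + (r (Suc i) - r i)" by simp
    then have "v (z - r i) \<le> max (v (z - r (Suc i))) (v (r (Suc i) - r i))" using vadd[OF na, of "z - r (Suc i)" "r (Suc i) - r i"] by metis
    then show "z \<in> coset (r i) (I_seq p (val_ring v) i)"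
      unfolding cosetI using h rstep[of i] cdec[of i] by simp
  qed
  have ne: "(\<Inter>i. coset (r i) (I_seq p (val_ring v) i)) \<noteq> {}"
    by (rule NC[unfolded nested_coset_condition_def, rule_format, OF rR nest])
  then obtain x where x0: "x \<in> (\<Inter>i. coset (r i) (I_seq p (val_ring v) i))" by auto
  have x: "x \<in> coset (r i) (I_seq p (val_ring v) i)" for i using x0 by simp
  obtain y where y: "algebraic y" "v (x - y) < v pi" using dens[OF vpi_pos] by blast
  obtain n where n: "a n = y" using asurj[OF y(1)] by blast
  have "v (x - r (Suc n)) \<le> v (c (Suc n))" using x[of "Suc n"] by (simp only: cosetI)
  moreover have "a n - r (Suc n) = (x - r (Suc n)) + (y - x)" using n by simp
  ultimately have "v (a n - r (Suc n)) \<le> max (v (x - r (Suc n))) (v (y - x))" using vadd[OF na, of "x - r (Suc n)" "y - x"] by metis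
  moreover have "v (y - x) < v (c (Suc n))" using y(2) vsym[OF na, of x y] cgt[of "Suc n"] by simp
  ultimately show False using avoid[of n] \<open>v (x - r (Suc n)) \<le> v (c (Suc n))\<close> by linarith
qed

end
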